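(* Let $d\ge3$ and let $\mathcal C\subset\mathbb T^d=\mathbb R^d/\mathbb Z^d$ be a smooth curve of length $L$ with unit speed parameterization $\gamma:[0,L]\to\mathbb T^d$. For a positive integer $E$ with $\mathcal E(E)=\{\mu\in\mathbb Z^d:|\mu|^2=E\}$ nonempty, let $N=\#\mathcal E(E)$ and $$r(t_1,t_2)=\frac1N\sum_{\mu\in\mathcal E(E)}\cos\left(2\pi\langle\mu,\gamma(t_1)-\gamma(t_2)\rangle\right).$$ Then there exists a constant $c_0>0$ (independent of $E$) such that for all $E$ and all $t_1\ne t_2\in[0,L]$ with $|t_2-t_1|<c_0/\sqrt E$ we have $r(t_1,t_2)\ne\pm1$.
   Context: A curve means a parameterized, compact, immersed curve. $r$ is the covariance function $\mathbb E[f(t_1)f(t_2)]$ of the restriction $f=F\circ\gamma$ of the arithmetic random wave $F(x)=N^{-1/2}\sum_{\mu\in\mathcal E(E)}a_\mu e^{2\pi i\langle\mu,x\rangle}$ ($a_\mu$ standard complex Gaussians, independent save for $a_{-\mu}=\overline{a_\mu}$). *)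

theory Defs
  imports "HOL-Analysis.Analysis"
begin

definition smooth_on :: "real set \<Rightarrow> (real \<Rightarrow> 'a::real_normed_vector) \<Rightarrow> bool" where
  "smooth_on S g \<longleftrightarrow>
     (\<exists>D::nat \<Rightarrow> real \<Rightarrow> 'a. D 0 = g \<and>
        (\<forall>k. \<forall>t\<in>S. (D k has_vector_derivative D (Suc k) t) (at t within S)))"

definition lattice_shell :: "nat \<Rightarrow> (int ^ 'n::finite) set" where
  "lattice_shell E = {\<mu>. (\<Sum>i\<in>UNIV. (\<mu> $ i)^2) = int E}"

definition ipair :: "int ^ 'n::finite \<Rightarrow> real ^ 'n \<Rightarrow> real" where
  "ipair \<mu> x = (\<Sum>i\<in>UNIV. of_int (\<mu> $ i) * x $ i)"

text \<open>Covariance function r(t1,t2) of the arithmetic random wave restricted to the curve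
  (given by a lift gamma : [0,L] -> R^d of the torus curve).\<close>
definition covr :: "(real \<Rightarrow> real ^ 'n::finite) \<Rightarrow> nat \<Rightarrow> real \<Rightarrow> real \<Rightarrow> real" where
  "covr \<gamma> E t1 t2 =
     (1 / real (card (lattice_shell E :: (int ^ 'n) set))) *
     (\<Sum>\<mu>\<in>lattice_shell E. cos (2 * pi * ipair \<mu> (\<gamma> t1 - \<gamma> t2)))"

end

theory Submission
  imports Defs
begin

lemma half_aux: "(a::real) \<le> b + a / 2 \<Longrightarrow> a / 2 \<le> b" by linarith

lemma up_aux: "(a::real) \<le> x + y \<Longrightarrow> y \<le> h / 2 \<Longrightarrow> x = h \<Longrightarrow> d = a \<Longrightarrow> d \<le> 3/2 * h" by linarith

lemma curve_lin:
  fixes \<gamma> g :: "real \<Rightarrow> 'a::real_normed_vector"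
  assumes der: "\<And>t. t\<in>{0..L} \<Longrightarrow> (\<gamma> has_vector_derivative g t) (at t within {0..L})"
    and cont: "continuous_on {0..L} g"
  shows "\<exists>c>0. \<forall>t1\<in>{0..L}. \<forall>t2\<in>{0..L}. \<bar>t2-t1\<bar> < c \<longrightarrow>
           norm (\<gamma> t2 - \<gamma> t1 - (t2-t1) *\<^sub>R g t1) \<le> \<bar>t2-t1\<bar> / 2"
proof -
  have "uniformly_continuous_on {0..L} g"
    using compact_uniformly_continuous[OF cont] by simp
  then obtain c where c: "c>0" and cc: "\<And>x y. x\<in>{0..L} \<Longrightarrow> y\<in>{0..L} \<Longrightarrow> dist y x < c \<Longrightarrow> dist (g y) (g x) < 1/2"
    unfolding uniformly_continuous_on_def by (meson half_gt_zero zero_less_one)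
  show ?thesis
  proof (intro exI[of _ c] conjI c ballI impI)
    fix t1 t2 assume t1: "t1\<in>{0..L}" and t2: "t2\<in>{0..L}" and d: "\<bar>t2-t1\<bar> < c"
    define S where "S = {min t1 t2 .. max t1 t2}"
    have SL: "S \<subseteq> {0..L}" using t1 t2 by (auto simp: S_def)
    have seg: "t1 + t *\<^sub>R (t2 - t1) \<in> S" if "t \<in> {0..1}" for t
    proof -
      have a: "t * (t2-t1) \<le> max 0 (t2-t1)" "min 0 (t2-t1) \<le> t * (t2-t1)"
        using that mult_right_mono[of t 1 "t2-t1"] mult_right_mono_neg[of t 1 "t2-t1"]
          mult_nonneg_nonneg[of t "t2-t1"] mult_nonneg_nonpos[of t "t2-t1"]
        by (auto simp: max_def min_def)
      then show ?thesis by (auto simp: S_def)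
    qed
    have D: "(\<gamma> has_derivative (\<lambda>h. h *\<^sub>R g x)) (at x within S)" if "x \<in> S" for x
    proof -
      have "x \<in> {0..L}" using that SL by auto
      then show ?thesis using der[of x] has_derivative_subset[OF _ SL]
        by (auto simp: has_vector_derivative_def)
    qed
    have B: "onorm ((\<lambda>h. h *\<^sub>R g x) - (\<lambda>h. h *\<^sub>R g t1)) \<le> 1/2" if "x \<in> S" for x
    proof -
      have "(\<lambda>h. h *\<^sub>R g x) - (\<lambda>h. h *\<^sub>R g t1) = (\<lambda>h. id h *\<^sub>R (g x - g t1))"
        by (auto simp: fun_diff_def algebra_simps)
      then have "onorm ((\<lambda>h. h *\<^sub>R g x) - (\<lambda>h. h *\<^sub>R g t1)) = norm (g x - g t1)"
        using onorm_scaleR_left[OF bounded_linear_ident, of "g x - g t1"] onorm_id[where 'a=real] by simp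
      also have "\<dots> < 1/2"
      proof -
        have "dist x t1 < c" using that d by (auto simp: S_def dist_real_def)
        then show ?thesis using cc[of t1 x] t1 that SL by (auto simp: dist_norm)
      qed
      finally show ?thesis by simp
    qed
    have t1S: "t1 \<in> S" by (auto simp: S_def)
    from differentiable_bound_linearization[OF seg D B t1S]
    show "norm (\<gamma> t2 - \<gamma> t1 - (t2-t1) *\<^sub>R g t1) \<le> \<bar>t2-t1\<bar> / 2" by simp
  qed
qed

lemma ipair_bound:
  assumes "\<mu> \<in> lattice_shell E"
  shows "\<bar>ipair \<mu> x\<bar> \<le> sqrt (real E) * norm x"
proof -
  define m :: "real ^ 'a" where "m = (\<chi> i. of_int (\<mu> $ i))"
  have 1: "ipair \<mu> x = m \<bullet> x" by (simp add: ipair_def m_def inner_vec_def)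
  have "m \<bullet> m = of_int (\<Sum>i\<in>UNIV. (\<mu> $ i)^2)"
    by (simp add: m_def inner_vec_def power2_eq_square)
  also have "\<dots> = real E" using assms by (simp add: lattice_shell_def)
  finally have "norm m = sqrt (real E)" by (simp add: norm_eq_sqrt_inner)
  then show ?thesis using 1 Cauchy_Schwarz_ineq2[of m x] by simp
qed

lemma shell_span:
  fixes x :: "real ^ 'n"
  assumes E: "E > 0" and ne: "(lattice_shell E :: (int ^ 'n) set) \<noteq> {}"
    and z: "\<forall>\<mu>\<in>(lattice_shell E :: (int ^ 'n) set). ipair \<mu> x = 0"
  shows "x = 0"
proof -
  obtain \<mu> :: "int ^ 'n" where mu: "\<mu> \<in> lattice_shell E" using ne by blast
  have "\<exists>i. \<mu> $ i \<noteq> 0"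
  proof (rule ccontr)
    assume "\<not> ?thesis"
    then have "(\<Sum>i\<in>UNIV. (\<mu> $ i)^2) = 0" by simp
    then show False using mu E by (simp add: lattice_shell_def)
  qed
  then obtain i where i: "\<mu> $ i \<noteq> 0" by blast
  show ?thesis
  proof (rule vec_eq_iff[THEN iffD2], rule allI)
    fix j
    define sw where "sw k = (if k = i then j else if k = j then i else k)" for k
    have swsw: "sw (sw k) = k" for k by (simp add: sw_def)
    define \<nu> :: "int ^ 'n" where "\<nu> = (\<chi> k. \<mu> $ sw k)"
    define \<nu>' :: "int ^ 'n" where "\<nu>' = (\<chi> k. if k = j then - \<nu> $ k else \<nu> $ k)"
    have "(\<Sum>k\<in>UNIV. (\<nu> $ k)^2) = (\<Sum>k\<in>UNIV. (\<mu> $ k)^2)"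
      unfolding \<nu>_def by (rule sum.reindex_bij_witness[of _ sw sw]) (auto simp: swsw)
    then have nu: "\<nu> \<in> lattice_shell E" using mu by (simp add: lattice_shell_def)
    have "(\<Sum>k\<in>UNIV. (\<nu>' $ k)^2) = (\<Sum>k\<in>UNIV. (\<nu> $ k)^2)"
      unfolding \<nu>'_def by (rule sum.cong) auto
    then have nu': "\<nu>' \<in> lattice_shell E" using nu by (simp add: lattice_shell_def)
    have "ipair \<nu> x - ipair \<nu>' x = (\<Sum>k\<in>UNIV. (if k = j then 2 * of_int (\<nu> $ j) * x $ j else 0))"
      unfolding ipair_def sum_subtractf[symmetric] by (rule sum.cong) (auto simp: \<nu>'_def)
    also have "\<dots> = 2 * of_int (\<nu> $ j) * x $ j" by simp
    finally have "2 * of_int (\<nu> $ j) * x $ j = 0" using z nu nu' by simp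
    moreover have "\<nu> $ j = \<mu> $ i" by (simp add: \<nu>_def sw_def)
    ultimately show "x $ j = 0 $ j" using i by simp
  qed
qed

theorem lemma2p4:
  fixes \<gamma> :: "real \<Rightarrow> real ^ 'n" and L :: real
  assumes "CARD('n) \<ge> 3"
    and "L > 0"
    and "smooth_on {0..L} \<gamma>"
    and "\<forall>t\<in>{0..L}. \<exists>v. (\<gamma> has_vector_derivative v) (at t within {0..L}) \<and> norm v = 1"
  shows "\<exists>c0>0. \<forall>E::nat. E > 0 \<longrightarrow> (lattice_shell E :: (int ^ 'n) set) \<noteq> {} \<longrightarrow>
           (\<forall>t1\<in>{0..L}. \<forall>t2\<in>{0..L}. t1 \<noteq> t2 \<and> \<bar>t2 - t1\<bar> < c0 / sqrt (real E) \<longrightarrow>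
              covr \<gamma> E t1 t2 \<noteq> 1 \<and> covr \<gamma> E t1 t2 \<noteq> -1)"
proof -
  obtain D :: "nat \<Rightarrow> real \<Rightarrow> real ^ 'n" where D0: "D 0 = \<gamma>"
    and Dk: "\<And>k t. t \<in> {0..L} \<Longrightarrow> (D k has_vector_derivative D (Suc k) t) (at t within {0..L})"
    using assms(3) unfolding smooth_on_def by blast
  have der: "\<And>t. t \<in> {0..L} \<Longrightarrow> (\<gamma> has_vector_derivative D 1 t) (at t within {0..L})"
    using Dk[of _ 0] D0 by simp
  have cont: "continuous_on {0..L} (D 1)"
    using Dk[of _ 1] has_vector_derivative_continuous continuous_on_eq_continuous_within by blast
  have n1: "norm (D 1 t) = 1" if t: "t \<in> {0..L}" for t
  proof -
    obtain v where v: "(\<gamma> has_vector_derivative v) (at t within {0..L})" "norm v = 1"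
      using assms(4) t by blast
    have "D 1 t = v"
      using vector_derivative_unique_within_closed_interval[of 0 L t \<gamma> "D 1 t" v] assms(2) t der[OF t] v(1)
      by simp
    then show ?thesis using v by simp
  qed
  obtain c1 where c1: "c1 > 0" and cl: "\<And>t1 t2. t1\<in>{0..L} \<Longrightarrow> t2\<in>{0..L} \<Longrightarrow> \<bar>t2-t1\<bar> < c1 \<Longrightarrow>
           norm (\<gamma> t2 - \<gamma> t1 - (t2-t1) *\<^sub>R D 1 t1) \<le> \<bar>t2-t1\<bar> / 2"
    using curve_lin[of L \<gamma> "D 1", OF der cont] by blast
  define c0 where "c0 = min c1 (1/8)"
  have c0: "c0 > 0" using c1 by (simp add: c0_def)
  show ?thesis
  proof (rule exI[of _ c0], rule conjI[OF c0], intro allI impI ballI)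
    fix E :: nat and t1 t2
    assume E: "E > 0" and ne: "(lattice_shell E :: (int ^ 'n) set) \<noteq> {}"
      and t1: "t1 \<in> {0..L}" and t2: "t2 \<in> {0..L}"
      and tt: "t1 \<noteq> t2 \<and> \<bar>t2 - t1\<bar> < c0 / sqrt (real E)"
    have sE: "sqrt (real E) \<ge> 1" using E by simp
    have hpos: "\<bar>t2 - t1\<bar> > 0" using tt by simp
    have "c0 / sqrt (real E) \<le> c0" using sE c0 by (simp add: divide_le_eq)
    then have hc0: "\<bar>t2 - t1\<bar> < c0" using tt by linarith
    have "\<bar>t2 - t1\<bar> * sqrt (real E) < c0" using tt sE by (simp add: less_divide_eq mult.commute)
    define \<delta> where "\<delta> = \<gamma> t1 - \<gamma> t2"
    have lin: "norm (\<gamma> t2 - \<gamma> t1 - (t2-t1) *\<^sub>R D 1 t1) \<le> \<bar>t2-t1\<bar> / 2"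
      using cl[OF t1 t2] hc0 c0_def by simp
    have nr: "norm ((t2-t1) *\<^sub>R D 1 t1) = \<bar>t2-t1\<bar>" using n1[OF t1] by simp
    have nd: "norm \<delta> = norm (\<gamma> t2 - \<gamma> t1)" by (simp add: \<delta>_def norm_minus_commute)
    have dpos: "\<delta> \<noteq> 0"
    proof -
      have "norm ((t2-t1) *\<^sub>R D 1 t1) \<le> norm (\<gamma> t2 - \<gamma> t1) + norm (\<gamma> t2 - \<gamma> t1 - (t2-t1) *\<^sub>R D 1 t1)"
        using norm_triangle_ineq4[of "\<gamma> t2 - \<gamma> t1" "\<gamma> t2 - \<gamma> t1 - (t2-t1) *\<^sub>R D 1 t1"] by simp
      then have "\<bar>t2-t1\<bar> \<le> norm (\<gamma> t2 - \<gamma> t1) + \<bar>t2-t1\<bar> / 2" using lin nr by linarith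
      then have "\<bar>t2-t1\<bar> / 2 \<le> norm (\<gamma> t2 - \<gamma> t1)" by (rule half_aux)
      then have "norm \<delta> \<ge> \<bar>t2-t1\<bar> / 2" using nd by simp
      then show ?thesis using hpos by auto
    qed
    have dup: "norm \<delta> \<le> 3/2 * \<bar>t2-t1\<bar>"
    proof -
      have "norm (\<gamma> t2 - \<gamma> t1) \<le> norm ((t2-t1) *\<^sub>R D 1 t1) + norm (\<gamma> t2 - \<gamma> t1 - (t2-t1) *\<^sub>R D 1 t1)"
        using norm_triangle_ineq[of "(t2-t1) *\<^sub>R D 1 t1" "\<gamma> t2 - \<gamma> t1 - (t2-t1) *\<^sub>R D 1 t1"] by simp
      then show ?thesis using lin nr nd by (rule up_aux)
    qed
    have small: "\<bar>ipair \<mu> \<delta>\<bar> < 1/4" if mu: "\<mu> \<in> lattice_shell E" for \<mu> :: "int ^ 'n"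
    proof -
      have "\<bar>ipair \<mu> \<delta>\<bar> \<le> sqrt (real E) * norm \<delta>" by (rule ipair_bound[OF mu])
      also have "\<dots> \<le> sqrt (real E) * (3/2 * \<bar>t2-t1\<bar>)" using dup by (intro mult_left_mono) auto
      also have "\<dots> = 3/2 * (\<bar>t2 - t1\<bar> * sqrt (real E))" by simp
      also have "\<dots> < 3/2 * c0" using \<open>\<bar>t2 - t1\<bar> * sqrt (real E) < c0\<close> by (simp add: mult.commute)
      also have "\<dots> \<le> 3/16" by (simp add: c0_def)
      finally show ?thesis by simp
    qed
    have cpos: "cos (2 * pi * ipair \<mu> \<delta>) > 0" if mu: "\<mu> \<in> lattice_shell E" for \<mu> :: "int ^ 'n"
    proof (rule cos_gt_zero_pi)
      have x: "- (1/4) < ipair \<mu> \<delta>" "ipair \<mu> \<delta> < 1/4" using small[OF mu] by auto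
      have p: "0 < 2 * pi" using pi_gt_zero by simp
      have "2 * pi * ipair \<mu> \<delta> < 2 * pi * (1/4)" by (rule mult_strict_left_mono[OF x(2) p])
      moreover have "2 * pi * (- (1/4)) < 2 * pi * ipair \<mu> \<delta>" by (rule mult_strict_left_mono[OF x(1) p])
      ultimately show "- (pi / 2) < 2 * pi * ipair \<mu> \<delta>" "2 * pi * ipair \<mu> \<delta> < pi / 2" by auto
    qed
    have cv: "covr \<gamma> E t1 t2 = (1 / real (card (lattice_shell E :: (int ^ 'n) set))) *
       (\<Sum>\<mu>\<in>lattice_shell E. cos (2 * pi * ipair \<mu> \<delta>))"
      by (simp add: covr_def \<delta>_def)
    show "covr \<gamma> E t1 t2 \<noteq> 1 \<and> covr \<gamma> E t1 t2 \<noteq> -1"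
    proof (cases "finite (lattice_shell E :: (int ^ 'n) set)")
      case False
      then show ?thesis using cv by simp
    next
      case True
      define N where "N = real (card (lattice_shell E :: (int ^ 'n) set))"
      have Np: "N > 0" using True ne by (simp add: N_def card_gt_0_iff)
      have sp: "(\<Sum>\<mu>\<in>lattice_shell E. cos (2 * pi * ipair \<mu> \<delta>)) > 0"
        by (rule sum_pos[OF True ne cpos])
      have cvpos: "covr \<gamma> E t1 t2 > 0" using cv sp Np N_def by simp
      have "covr \<gamma> E t1 t2 \<noteq> 1"
      proof
        assume c1': "covr \<gamma> E t1 t2 = 1"
        then have "(\<Sum>\<mu>\<in>lattice_shell E. cos (2 * pi * ipair \<mu> \<delta>)) = N"
          using cv Np N_def by (simp add: field_simps)
        then have "(\<Sum>\<mu>\<in>lattice_shell E. 1 - cos (2 * pi * ipair \<mu> \<delta>)) = 0"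
          by (simp add: sum_subtractf N_def)
        then have all: "\<forall>\<mu>\<in>lattice_shell E. 1 - cos (2 * pi * ipair \<mu> \<delta>) = 0"
          using sum_nonneg_eq_0_iff[OF True, of "\<lambda>\<mu>. 1 - cos (2 * pi * ipair \<mu> \<delta>)"] by simp
        have "\<forall>\<mu>\<in>(lattice_shell E :: (int ^ 'n) set). ipair \<mu> \<delta> = 0"
        proof
          fix \<mu> :: "int ^ 'n" assume mu: "\<mu> \<in> lattice_shell E"
          then have "cos (2 * pi * ipair \<mu> \<delta>) = 1" using all by simp
          then obtain n :: int where n: "2 * pi * ipair \<mu> \<delta> = real_of_int n * 2 * pi"
            using cos_one_2pi_int by blast
          then have e: "ipair \<mu> \<delta> = real_of_int n" using pi_gt_zero by (simp add: field_simps)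
          then have "\<bar>real_of_int n\<bar> < 1/4" using small[OF mu] by simp
          then have "n = 0" by linarith
          then show "ipair \<mu> \<delta> = 0" using e by simp
        qed
        then have "\<delta> = 0" using shell_span[OF E ne] by blast
        then show False using dpos by simp
      qed
      then show ?thesis using cvpos by simp
    qed
  qed
qed

end
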